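(* Let $p$ be a prime, $q=p^{m}$, and let $f(x)=\alpha_{d}x^{d}+\cdots+\alpha_{1}x\in\mathbb{F}_{q}[x]$ with $\alpha_{d}\neq 0$ and $d<p$. Let $a_{1},\dots,a_{d}$ be the Teichm\"uller lifts of $\alpha_{1},\dots,\alpha_{d}$ in the ring of integers $\mathcal{O}_{m}$ of the unramified extension of $\mathbb{Q}_{p}$ of degree $m$. Let $\pi\in\overline{\mathbb{Q}}_{p}$ satisfy $\pi^{p-1}=-p$, let $\theta(x)=\exp(\pi x-\pi x^{p})$, and write $$F(x)=\prod_{i=1}^{d}\theta(a_{i}x^{i})=\sum_{n\geq 0}h_{n}x^{n}.$$ Then, with $\mathbf{ord}_{p}$ the $p$-adic valuation normalized by $\mathbf{ord}_{p}(p)=1$: (i) $\mathbf{ord}_{p}h_{i}\geq \dfrac{i}{d(p-1)}$ for $0\leq i\leq p^{2}-1$; (ii) $\mathbf{ord}_{p}h_{i}\geq \dfrac{(p-1)i}{dp^{2}}$ for $i\geq p^{2}$.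
   Context: $\theta(x)=\exp(\pi x-\pi x^{p})$ is Dwork's splitting function, viewed as a formal power series $\sum_{i\ge0}b_i x^i$ with coefficients in $\mathbb{Q}_p(\pi)$; $F(x)$ is the formal power series product, and $h_n$ is its coefficient of $x^n$, i.e. $h_{n}=\sum_{i_{1}+2i_{2}+\cdots+di_{d}=n}a_{1}^{i_{1}}\cdots a_{d}^{i_{d}}b_{i_{1}}\cdots b_{i_{d}}$. The Teichm\"uller lift of $\alpha\in\mathbb{F}_q$ is the unique element of $\mathcal{O}_m$ reducing to $\alpha$ and satisfying $a^{q}=a$. *)

theory Defs
  imports "HOL-Computational_Algebra.Computational_Algebra" "HOL-Library.Extended_Real"
begin

text \<open>A nonarchimedean (exponential) valuation v on a field of characteristic 0,
  with v x = infinity exactly for x = 0, normalised by v p = 1.  Its restriction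
  to the rationals is then the p-adic valuation ord_p.  The algebraic closure of
  Q_p with ord_p is an instance.\<close>
definition nonarch_val :: "nat \<Rightarrow> ('a::field_char_0 \<Rightarrow> ereal) \<Rightarrow> bool" where
  "nonarch_val p v \<longleftrightarrow>
     (\<forall>x. v x = \<infinity> \<longleftrightarrow> x = 0) \<and> (\<forall>x. v x \<noteq> -\<infinity>) \<and>
     (\<forall>x y. v (x * y) = v x + v y) \<and>
     (\<forall>x y. min (v x) (v y) \<le> v (x + y)) \<and>
     v (of_nat p) = 1"

definition dwork_theta :: "nat \<Rightarrow> 'a::field_char_0 \<Rightarrow> 'a fps" where
  "dwork_theta p w = fps_exp w * fps_compose (fps_exp (- w)) (fps_X ^ p)"

definition dwork_F :: "nat \<Rightarrow> 'a::field_char_0 \<Rightarrow> nat \<Rightarrow> (nat \<Rightarrow> 'a) \<Rightarrow> 'a fps" where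
  "dwork_F p w d a = (\<Prod>i\<in>{1..d}. fps_compose (dwork_theta p w) (fps_const (a i) * fps_X ^ i))"

end

theory Submission
  imports Defs "HOL-Number_Theory.Number_Theory"
begin

lemma fermat_int:
  fixes a :: int assumes p: "prime (p::nat)"
  shows "int p dvd a ^ p - a"
proof -
  define n where "n = nat (a mod int p)"
  have pp: "p > 1" using p prime_gt_1_nat by blast
  have an: "[a = int n] (mod int p)" unfolding n_def using pp
    by (simp add: cong_def)
  have "[n ^ p = n] (mod p)"
  proof (cases "p dvd n")
    case True
    then have "p dvd n ^ p" using pp dvd_power[of p n] by (meson dvd_trans less_trans zero_less_one)
    then show ?thesis using True by (simp add: cong_def dvd_imp_mod_0)
  next
    case False
    then have "[n ^ (p - 1) = 1] (mod p)" using fermat_theorem p by blast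
    then have "[n ^ (p - 1) * n = 1 * n] (mod p)" by (rule cong_scalar_right)
    moreover have "n ^ (p - 1) * n = n ^ p" using pp
      by (metis Suc_diff_1 less_trans power_Suc2 zero_less_one)
    ultimately show ?thesis by simp
  qed
  then have "[int n ^ p = int n] (mod int p)"
    by (metis cong_int_iff of_nat_power)
  moreover have "[a ^ p = int n ^ p] (mod int p)" using an by (rule cong_pow)
  ultimately have "[a ^ p = a] (mod int p)" using an
    by (meson cong_sym cong_trans)
  then show ?thesis by (simp add: cong_iff_dvd_diff)
qed

definition pint :: "nat \<Rightarrow> rat \<Rightarrow> bool" where
  "pint p r \<longleftrightarrow> (\<exists>a b::int. b \<noteq> 0 \<and> \<not> int p dvd b \<and> r = of_int a / of_int b)"

definition pdv :: "nat \<Rightarrow> rat \<Rightarrow> bool" where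
  "pdv p r \<longleftrightarrow> pint p (r / of_nat p)"

context fixes p :: nat assumes p: "prime p"
begin

lemma p_gt1: "p > 1" using p prime_gt_1_nat by blast

lemma pint_of_int: "pint p (of_int a)"
  unfolding pint_def using p_gt1
  by (intro exI[of _ a] exI[of _ 1]) auto

lemma pint_0: "pint p 0" using pint_of_int[of 0] by simp
lemma pint_1: "pint p 1" using pint_of_int[of 1] by simp
lemma pint_of_nat: "pint p (of_nat n)" using pint_of_int[of "int n"] by simp

lemma pint_add: assumes "pint p r" "pint p s" shows "pint p (r + s)"
proof -
  obtain a b where ab: "b \<noteq> 0" "\<not> int p dvd b" "r = of_int a / of_int b" using assms(1) pint_def by auto
  obtain c d where cd: "d \<noteq> 0" "\<not> int p dvd d" "s = of_int c / of_int d" using assms(2) pint_def by auto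
  have "r + s = of_int (a * d + c * b) / of_int (b * d)" using ab cd by (simp add: field_simps)
  moreover have "\<not> int p dvd b * d" using ab cd p
    by (simp add: prime_dvd_mult_iff)
  ultimately show ?thesis unfolding pint_def using ab cd by (intro exI[of _ "a*d+c*b"] exI[of _ "b*d"]) auto
qed

lemma pint_mult: assumes "pint p r" "pint p s" shows "pint p (r * s)"
proof -
  obtain a b where ab: "b \<noteq> 0" "\<not> int p dvd b" "r = of_int a / of_int b" using assms(1) pint_def by auto
  obtain c d where cd: "d \<noteq> 0" "\<not> int p dvd d" "s = of_int c / of_int d" using assms(2) pint_def by auto
  have "r * s = of_int (a * c) / of_int (b * d)" using ab cd by (simp add: field_simps)
  moreover have "\<not> int p dvd b * d" using ab cd p
    by (simp add: prime_dvd_mult_iff)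
  ultimately show ?thesis unfolding pint_def using ab cd by (intro exI[of _ "a*c"] exI[of _ "b*d"]) auto
qed

lemma pint_uminus: assumes "pint p r" shows "pint p (- r)"
  using pint_mult[OF pint_of_int[of "-1"] assms] by simp

lemma pint_diff: assumes "pint p r" "pint p s" shows "pint p (r - s)"
  using pint_add[OF assms(1) pint_uminus[OF assms(2)]] by simp

lemma pint_sum: "(\<And>i. i \<in> S \<Longrightarrow> pint p (f i)) \<Longrightarrow> pint p (sum f S)"
  by (induction S rule: infinite_finite_induct) (auto simp: pint_0 pint_add)

lemma pint_prod: "(\<And>i. i \<in> S \<Longrightarrow> pint p (f i)) \<Longrightarrow> pint p (prod f S)"
  by (induction S rule: infinite_finite_induct) (auto simp: pint_1 pint_mult)

lemma pint_power: "pint p r \<Longrightarrow> pint p (r ^ n)"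
  by (induction n) (auto simp: pint_1 pint_mult)

lemma pint_div_int: assumes "pint p r" "\<not> int p dvd c" shows "pint p (r / of_int c)"
proof -
  obtain a b where ab: "b \<noteq> 0" "\<not> int p dvd b" "r = of_int a / of_int b" using assms(1) pint_def by auto
  have c0: "c \<noteq> 0" using assms(2) by auto
  have "r / of_int c = of_int a / of_int (b * c)" using ab c0 by (simp add: field_simps)
  moreover have "\<not> int p dvd b * c" using ab assms(2) p
    by (simp add: prime_dvd_mult_iff)
  ultimately show ?thesis unfolding pint_def using ab c0 by (intro exI[of _ "a"] exI[of _ "b*c"]) auto
qed

lemma pdv_add: "pdv p r \<Longrightarrow> pdv p s \<Longrightarrow> pdv p (r + s)"
  unfolding pdv_def using pint_add by (simp add: add_divide_distrib)

lemma pdv_diff: "pdv p r \<Longrightarrow> pdv p s \<Longrightarrow> pdv p (r - s)"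
  unfolding pdv_def using pint_diff by (simp add: diff_divide_distrib)

lemma pdv_uminus: "pdv p r \<Longrightarrow> pdv p (- r)"
  unfolding pdv_def using pint_uminus by simp

lemma pdv_0: "pdv p 0" unfolding pdv_def by (simp add: pint_0)

lemma pdv_sum: "(\<And>i. i \<in> S \<Longrightarrow> pdv p (f i)) \<Longrightarrow> pdv p (sum f S)"
  by (induction S rule: infinite_finite_induct) (auto simp: pdv_0 pdv_add)

lemma pdv_mult_left: "pint p r \<Longrightarrow> pdv p s \<Longrightarrow> pdv p (r * s)"
  unfolding pdv_def using pint_mult by (metis times_divide_eq_right)

lemma pdv_mult_right: "pdv p r \<Longrightarrow> pint p s \<Longrightarrow> pdv p (r * s)"
  using pdv_mult_left by (metis mult.commute)

lemma pdv_p_mult: "pint p r \<Longrightarrow> pdv p (of_nat p * r)"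
  unfolding pdv_def using p_gt1 by simp

lemma pdv_imp_pint: "pdv p r \<Longrightarrow> pint p r"
  unfolding pdv_def using pint_mult[of "r / of_nat p" "of_nat p"] pint_of_nat p_gt1 by auto

lemma pdv_of_int: "int p dvd a \<Longrightarrow> pdv p (of_int a)"
proof -
  assume "int p dvd a"
  then obtain k where "a = int p * k" by (auto elim: dvdE)
  then show ?thesis using pdv_p_mult[OF pint_of_int[of k]] by simp
qed

lemma pint_fermat: assumes "pint p c" shows "pdv p (c ^ p - c)"
proof -
  obtain a b where ab: "b \<noteq> 0" "\<not> int p dvd b" "c = of_int a / of_int b" using assms pint_def by auto
  have pp: "p - 1 + 1 = p" using p_gt1 by simp
  have "c ^ p - c = of_int (a ^ p - a * b ^ (p - 1)) / of_int b ^ p"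
  proof -
    define B where "B = (of_int b :: rat)"
    have B0: "B \<noteq> 0" using ab B_def by simp
    have Bp: "B ^ p = B ^ (p-1) * B" unfolding B_def by (metis pp power_add power_one_right)
    have "c ^ p - c = of_int a ^ p / B ^ p - of_int a / B" using ab B_def by (simp add: power_divide)
    also have "of_int a / B = of_int a * B^(p-1) / B ^ p" using B0 Bp by simp
    finally show ?thesis using B_def by (simp add: diff_divide_distrib)
  qed
  moreover have "int p dvd a ^ p - a * b ^ (p - 1)"
  proof -
    have "int p dvd b ^ (p - 1) - 1"
    proof -
      have "int p dvd (b ^ (p-1)) * b - b" using fermat_int[OF p, of b]
        by (metis pp power_add power_one_right)
      then have "int p dvd (b ^ (p-1) - 1) * b" by (simp add: algebra_simps)
      then show ?thesis using ab(2) p by (simp add: prime_dvd_mult_iff)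
    qed
    then have "int p dvd a * (b ^ (p-1) - 1)" by simp
    moreover have "a ^ p - a * b ^ (p - 1) = (a ^ p - a) - a * (b ^ (p-1) - 1)" by (simp add: algebra_simps)
    ultimately show ?thesis using fermat_int[OF p, of a] by (metis dvd_diff)
  qed
  moreover have "\<not> int p dvd b ^ p" using ab(2) p
    using prime_dvd_power prime_nat_iff_prime by (metis prime_nat_int_transfer)
  ultimately show ?thesis
  proof -
    assume e: "c ^ p - c = of_int (a ^ p - a * b ^ (p - 1)) / of_int b ^ p"
      and d1: "int p dvd a ^ p - a * b ^ (p - 1)" and d2: "\<not> int p dvd b ^ p"
    define x where "x = a ^ p - a * b ^ (p - 1)"
    have h1: "pint p (of_int x / of_nat p)" using pdv_of_int[of x] d1 unfolding pdv_def x_def by simp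
    have h2: "pint p ((of_int x / of_nat p) / of_int (b ^ p))" using pint_div_int[OF h1 d2] by (simp only: of_int_power)
    have "(c ^ p - c) / of_nat p = (of_int x / of_nat p) / of_int (b ^ p)"
      using e unfolding x_def by (simp only: of_int_power divide_divide_eq_left mult.commute)
    then show ?thesis using h2 unfolding pdv_def by simp
  qed
qed

end


context fixes p :: nat assumes p: "prime p"
begin

lemma nu_Suc: "multiplicity p (fact (Suc n) :: nat) = multiplicity p (fact n :: nat) + multiplicity p (Suc n)"
proof -
  have f: "(fact (Suc n) :: nat) = Suc n * fact n" by (simp only: fact_Suc of_nat_id)
  have "multiplicity p (Suc n * fact n) = multiplicity p (Suc n) + multiplicity p (fact n :: nat)"
    by (rule prime_elem_multiplicity_mult_distrib[OF prime_imp_prime_elem[OF p]]) (simp_all only: fact_nonzero Suc_neq_Zero not_False_eq_True)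
  then show ?thesis unfolding f by simp
qed

lemma nu_add_small: "r < p \<Longrightarrow> multiplicity p (fact (p * q + r) :: nat) = multiplicity p (fact (p * q) :: nat)"
proof (induction r)
  case 0 then show ?case by simp
next
  case (Suc r)
  have nd: "\<not> p dvd Suc (p * q + r)"
  proof
    assume a: "p dvd Suc (p * q + r)"
    from a have "p dvd p * q + Suc r" by (simp only: add_Suc_right)
    then have "p dvd Suc r" by (metis dvd_add_right_iff dvd_triv_left)
    then show False using Suc.prems by (simp add: nat_dvd_not_less)
  qed
  have m0: "multiplicity p (Suc (p * q + r)) = 0" by (rule not_dvd_imp_multiplicity_0[OF nd])
  have "multiplicity p (fact (p * q + Suc r) :: nat) = multiplicity p (fact (Suc (p * q + r)) :: nat)"
    by (simp only: add_Suc_right)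
  also have "\<dots> = multiplicity p (fact (p * q + r) :: nat)" using nu_Suc[of "p * q + r"] m0 by (simp only: add_0_right)
  also have "\<dots> = multiplicity p (fact (p * q) :: nat)" using Suc by simp
  finally show ?case .
qed

lemma nu_mult: "multiplicity p (fact (p * q) :: nat) = q + multiplicity p (fact q :: nat)"
proof (induction q)
  case 0 then show ?case by simp
next
  case (Suc q)
  have p1: "p > 1" using p prime_gt_1_nat by blast
  have eq: "p * Suc q = Suc (p * q + (p - 1))" using p1 by simp
  have "multiplicity p (fact (p * Suc q) :: nat) = multiplicity p (fact (p * q + (p - 1)) :: nat) + multiplicity p (p * Suc q)"
    by (subst (1 2) eq) (rule nu_Suc)
  also have "multiplicity p (fact (p * q + (p - 1)) :: nat) = multiplicity p (fact (p * q) :: nat)"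
    using nu_add_small[of "p - 1" q] p1 by simp
  also have "multiplicity p (p * Suc q) = Suc (multiplicity p (Suc q))"
    using multiplicity_times_same[where p=p and x="Suc q"] p1 by simp
  finally show ?case using Suc.IH nu_Suc[of q] by simp
qed

lemma nu_bound: "m \<ge> 1 \<Longrightarrow> (p - 1) * multiplicity p (fact m :: nat) \<le> m - 1"
proof (induction m rule: less_induct)
  case (less m)
  have p1: "p > 1" using p prime_gt_1_nat by blast
  define q r where "q = m div p" and "r = m mod p"
  have m: "m = p * q + r" unfolding q_def r_def by simp
  have r: "r < p" unfolding r_def using p1 by simp
  have nu: "multiplicity p (fact m :: nat) = q + multiplicity p (fact q :: nat)"
    using nu_add_small[OF r, of q] nu_mult[of q] m by simp
  show ?case
  proof (cases "q = 0")
    case True then show ?thesis using nu by simp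
  next
    case False
    have "q < m" unfolding q_def using p1 less.prems by (simp add: div_less_dividend)
    then have "(p - 1) * multiplicity p (fact q :: nat) \<le> q - 1" using less.IH False by simp
    then have "(p - 1) * multiplicity p (fact m :: nat) \<le> (p - 1) * q + (q - 1)"
      using nu by (simp add: algebra_simps)
    also have "\<dots> \<le> m - 1"
    proof -
      have "(p - 1) * q = p * q - q" by (simp add: diff_mult_distrib)
      moreover have "q \<le> p * q" using p1 by simp
      moreover have "p * q \<le> m" using m by simp
      ultimately show ?thesis using False by linarith
    qed
    finally show ?thesis .
  qed
qed

lemma fact_decomp: obtains u :: nat where "fact m = p ^ multiplicity p (fact m :: nat) * u" "\<not> p dvd u"
  using multiplicity_decompose'[of "fact m :: nat" p] p
  by (metis fact_nonzero not_prime_unit)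

lemma pdv_pow_div_fact: assumes "j \<ge> 1" shows "pdv p (of_nat p ^ j / fact j)"
proof -
  have p1: "p > 1" using p prime_gt_1_nat by blast
  obtain u :: nat where u: "fact j = p ^ multiplicity p (fact j :: nat) * u" "\<not> p dvd u"
    using fact_decomp by blast
  define e where "e = multiplicity p (fact j :: nat)"
  have "(p - 1) * e \<le> j - 1" using nu_bound assms e_def by blast
  moreover have "1 * e \<le> (p - 1) * e" by (rule mult_le_mono1) (use p1 in simp)
  ultimately have e: "e \<le> j - 1" by linarith
  have u0: "u \<noteq> 0"
  proof
    assume "u = 0" then have "(fact j :: nat) = 0" using u(1) by simp
    then show False by simp
  qed
  have eq: "of_nat p ^ j / fact j / of_nat p = (of_int (int p ^ (j - 1 - e)) / of_int (int u) :: rat)"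
  proof -
    have f: "(fact j :: rat) = of_nat p ^ e * of_nat u"
    proof -
      have "(fact j :: rat) = of_nat (fact j :: nat)" by simp
      also have "\<dots> = of_nat (p ^ e * u)" using u e_def by simp
      finally show ?thesis by simp
    qed
    have j: "j = (j - 1 - e) + e + 1" using e assms by simp
    have pj: "(of_nat p ^ j :: rat) = of_nat p ^ (j - 1 - e) * of_nat p ^ e * of_nat p"
      by (subst j) (simp only: power_add power_one_right)
    have gen: "\<And>x y z uu :: rat. y \<noteq> 0 \<Longrightarrow> z \<noteq> 0 \<Longrightarrow> x * y * z / (y * uu) / z = x / uu"
      by simp
    have "(of_nat p ^ e :: rat) \<noteq> 0" "(of_nat p :: rat) \<noteq> 0" using p1 by auto
    then show ?thesis unfolding f pj using gen by simp
  qed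
  have pi: "pint p (of_int (int p ^ (j - 1 - e)) / of_int (int u))"
  proof (rule pint_div_int[OF p pint_of_int[OF p]])
    show "\<not> int p dvd int u" using u(2) by presburger
  qed
  show ?thesis unfolding pdv_def eq by (rule pi)
qed

end

lemma compose_cXq_nth:
  fixes f :: "'a::comm_ring_1 fps"
  assumes q: "q \<ge> 1"
  shows "(f oo (fps_const c * fps_X ^ q)) $ n = (if q dvd n then c ^ (n div q) * f $ (n div q) else 0)"
proof -
  have pw: "(fps_const c * fps_X ^ q) ^ i = fps_const (c ^ i) * fps_X ^ (q * i)" for i
    by (simp add: power_mult_distrib power_mult fps_const_power)
  have "(f oo (fps_const c * fps_X ^ q)) $ n = (\<Sum>i=0..n. f $ i * (if n = q * i then c ^ i else 0))"
    unfolding fps_compose_nth pw by (intro sum.cong) auto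
  also have "\<dots> = (if q dvd n then c ^ (n div q) * f $ (n div q) else 0)"
  proof (cases "q dvd n")
    case True
    then obtain k where k: "n = q * k" by auto
    have kn: "k \<le> n" using k q by simp
    have "(\<Sum>i=0..n. f $ i * (if n = q * i then c ^ i else 0)) = (\<Sum>i\<in>{k}. f $ i * (if n = q * i then c ^ i else 0))"
      by (rule sum.mono_neutral_right) (use k q kn in auto)
    also have "\<dots> = c ^ k * f $ k" using k by simp
    finally show ?thesis using True k q by simp
  next
    case False
    then have "\<And>i. n \<noteq> q * i" by auto
    then show ?thesis using False by simp
  qed
  finally show ?thesis .
qed

lemma compose_Xq_nth:
  fixes f :: "'a::comm_ring_1 fps"
  assumes q: "q \<ge> 1"
  shows "(f oo fps_X ^ q) $ n = (if q dvd n then f $ (n div q) else 0)"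
  using compose_cXq_nth[OF q, of f 1 n] by simp


definition pintU :: "nat \<Rightarrow> nat \<Rightarrow> rat fps \<Rightarrow> bool" where
  "pintU p n f \<longleftrightarrow> (\<forall>i\<le>n. pint p (f $ i))"

context fixes p :: nat assumes p: "prime p"
begin

lemma pintU_mult: "pintU p n f \<Longrightarrow> pintU p n g \<Longrightarrow> pintU p n (f * g)"
  unfolding pintU_def fps_mult_nth
  by (auto intro!: pint_sum[OF p] pint_mult[OF p])

lemma pintU_power: "pintU p n f \<Longrightarrow> pintU p n (f ^ k)"
proof (induction k)
  case 0 then show ?case unfolding pintU_def by (auto simp: pint_0[OF p] pint_1[OF p])
next
  case (Suc k) then show ?case by (simp add: pintU_mult)
qed

lemma pintU_const: "pint p c \<Longrightarrow> pintU p n (fps_const c)"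
  unfolding pintU_def by (auto simp: pint_0[OF p])

lemma frob: "pintU p n f \<Longrightarrow> pdv p ((f ^ p) $ n - (f oo fps_X ^ p) $ n)"
proof (induction n arbitrary: f rule: less_induct)
  case (less n f)
  have p1: "p > 1" using p prime_gt_1_nat by blast
  define c where "c = f $ 0"
  define g where "g = fps_shift 1 f"
  define A where "A = fps_const c"
  define B where "B = fps_X * g"
  have fAB: "f = A + B" unfolding A_def B_def g_def c_def
    by (auto simp: fps_eq_iff)
  have c: "pint p c" using less.prems unfolding pintU_def c_def by auto
  have pA: "pintU p n A" unfolding A_def using pintU_const[OF c] .
  have pB: "pintU p n B" using less.prems unfolding pintU_def B_def g_def by (auto simp: pint_0[OF p])
  have binom: "f ^ p = (\<Sum>k\<le>p. of_nat (p choose k) * A ^ k * B ^ (p - k))"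
    unfolding fAB by (rule binomial_ring)
  have split: "{..p} = insert 0 (insert p {1..p-1})" using p1 by auto
  define mid where "mid = (\<Sum>k\<in>{1..p-1}. of_nat (p choose k) * A ^ k * B ^ (p - k) :: rat fps)"
  have fp: "f ^ p = B ^ p + A ^ p + mid"
    unfolding binom mid_def split using p1 by (simp add: add.assoc)
  have Bp: "B ^ p = fps_X ^ p * g ^ p" unfolding B_def by (simp add: power_mult_distrib)
  have Xp0: "(fps_X ^ p :: rat fps) $ 0 = 0" using p1 by simp
  have comp: "f oo fps_X ^ p = A + fps_X ^ p * (g oo fps_X ^ p)"
  proof -
    have "f oo fps_X ^ p = (A oo fps_X ^ p) + (B oo fps_X ^ p)" unfolding fAB by (rule fps_compose_add_distrib)
    also have "A oo fps_X ^ p = A" unfolding A_def by simp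
    also have "B oo fps_X ^ p = (fps_X oo fps_X ^ p) * (g oo fps_X ^ p)"
      unfolding B_def by (rule fps_compose_mult_distrib[OF Xp0])
    also have "fps_X oo fps_X ^ p = (fps_X ^ p :: rat fps)" using Xp0 by simp
    finally show ?thesis .
  qed
  have mid_pdv: "pdv p (mid $ n)"
    unfolding mid_def fps_sum_nth
  proof (rule pdv_sum[OF p])
    fix k assume k: "k \<in> {1..p-1}"
    then have "p dvd (p choose k)" using p1 by (intro dvd_choose_prime) (auto simp: p)
    then obtain t where t: "p choose k = p * t" by auto
    have "pint p ((A ^ k * B ^ (p - k)) $ n)"
      using pintU_mult[OF pintU_power[OF pA] pintU_power[OF pB]] unfolding pintU_def by auto
    then have "pdv p (of_nat p * (of_nat t * (A ^ k * B ^ (p - k)) $ n))"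
      by (intro pdv_p_mult[OF p] pint_mult[OF p] pint_of_nat[OF p])
    moreover have "(of_nat (p choose k) * A ^ k * B ^ (p - k)) $ n = of_nat p * (of_nat t * (A ^ k * B ^ (p - k)) $ n)"
      unfolding t by (simp add: fps_of_nat[symmetric] mult.assoc)
    ultimately show "pdv p ((of_nat (p choose k) * A ^ k * B ^ (p - k)) $ n)" by simp
  qed
  have diff: "(f ^ p) $ n - (f oo fps_X ^ p) $ n
      = ((fps_X ^ p * g ^ p) $ n - (fps_X ^ p * (g oo fps_X ^ p)) $ n) + ((A ^ p) $ n - A $ n) + mid $ n"
    unfolding fp comp Bp by simp
  have part1: "pdv p ((fps_X ^ p * g ^ p) $ n - (fps_X ^ p * (g oo fps_X ^ p)) $ n)"
  proof (cases "n < p")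
    case True then show ?thesis by (simp add: fps_X_power_mult_nth pdv_0[OF p])
  next
    case False
    have lt: "n - p < n" using False p1 by simp
    have "pintU p (n - p) g" unfolding pintU_def g_def
    proof (intro allI impI)
      fix i assume "i \<le> n - p"
      then have "i + 1 \<le> n" using p1 False by linarith
      then show "pint p (fps_shift 1 f $ i)" using less.prems unfolding pintU_def by simp
    qed
    then have "pdv p ((g ^ p) $ (n - p) - (g oo fps_X ^ p) $ (n - p))" using less.IH[OF lt] by blast
    then show ?thesis using False by (simp add: fps_X_power_mult_nth)
  qed
  have part2: "pdv p ((A ^ p) $ n - A $ n)"
  proof (cases "n = 0")
    case True then show ?thesis unfolding A_def using pint_fermat[OF p c] by simp
  next
    case False then show ?thesis unfolding A_def by (simp add: pdv_0[OF p])
  qed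
  show ?case unfolding diff by (intro pdv_add[OF p] part1 part2 mid_pdv)
qed

end

definition Ef :: "nat \<Rightarrow> nat \<Rightarrow> rat fps" where
  "Ef p k = fps_exp (1 / of_nat p ^ k) oo fps_X ^ (p ^ k)"

fun Gf :: "nat \<Rightarrow> nat \<Rightarrow> rat fps" where
  "Gf p 0 = Ef p 0"
| "Gf p (Suc K) = Gf p K * Ef p (Suc K)"

definition Tf :: "nat \<Rightarrow> nat \<Rightarrow> rat fps" where
  "Tf p K = fps_exp (1 / of_nat p ^ K) oo fps_X ^ (p ^ Suc K)"

context fixes p :: nat assumes p: "prime p"
begin

lemma p1': "p > 1" using p prime_gt_1_nat by blast

lemma Xpow0: "k \<ge> 1 \<Longrightarrow> (fps_X ^ k :: 'a::comm_ring_1 fps) $ 0 = 0" by simp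

lemma Ef_compose: "Ef p k oo fps_X ^ p = fps_exp (1 / of_nat p ^ k) oo fps_X ^ (p ^ Suc k)"
proof -
  have "Ef p k oo fps_X ^ p = fps_exp (1 / of_nat p ^ k) oo (fps_X ^ (p ^ k) oo fps_X ^ p)"
    unfolding Ef_def using p1' by (intro fps_compose_assoc[symmetric]) auto
  also have "fps_X ^ (p ^ k) oo fps_X ^ p = (fps_X ^ p :: rat fps) ^ (p ^ k :: nat)"
  proof -
    have "(fps_X ^ p :: rat fps) $ 0 = 0" using p1' by simp
    from fps_X_power_compose[OF this, of "p ^ k"] show ?thesis .
  qed
  also have "\<dots> = (fps_X :: rat fps) ^ (p ^ Suc k)" by (simp add: power_mult[symmetric] mult.commute)
  finally show ?thesis .
qed

lemma Ef_power: "Ef p (Suc k) ^ p = Tf p k"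
proof -
  have "Ef p (Suc k) ^ p = fps_exp (1 / of_nat p ^ Suc k) ^ p oo fps_X ^ (p ^ Suc k)"
    unfolding Ef_def using p1' by (intro fps_compose_power) auto
  also have "fps_exp (1 / of_nat p ^ Suc k) ^ p = fps_exp (1 / (of_nat p :: rat) ^ k)"
    unfolding fps_exp_power_mult using p1' by simp
  finally show ?thesis unfolding Tf_def .
qed

lemma Gf_rel: "(Gf p K oo fps_X ^ p) * fps_exp (of_nat p) = Gf p K ^ p * Tf p K"
proof (induction K)
  case 0
  have g0: "Gf p 0 = fps_exp 1" by (simp add: Ef_def)
  have t0: "Tf p 0 = fps_exp 1 oo fps_X ^ p" by (simp add: Tf_def)
  have e: "fps_exp (1::rat) ^ p = fps_exp (of_nat p)" by (simp add: fps_exp_power_mult)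
  show ?case unfolding g0 t0 e by (rule mult.commute)
next
  case (Suc K)
  have "Gf p (Suc K) oo fps_X ^ p = (Gf p K oo fps_X ^ p) * (Ef p (Suc K) oo fps_X ^ p)"
    unfolding Gf.simps using p1' by (intro fps_compose_mult_distrib) simp
  also have "Ef p (Suc K) oo fps_X ^ p = Tf p (Suc K)" unfolding Ef_compose Tf_def ..
  finally have "(Gf p (Suc K) oo fps_X ^ p) * fps_exp (of_nat p) = ((Gf p K oo fps_X ^ p) * fps_exp (of_nat p)) * Tf p (Suc K)"
    by (simp add: ac_simps)
  also have "\<dots> = Gf p K ^ p * Tf p K * Tf p (Suc K)" using Suc.IH by simp
  also have "\<dots> = Gf p (Suc K) ^ p * Tf p (Suc K)"
    unfolding Gf.simps power_mult_distrib Ef_power ..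
  finally show ?case .
qed


lemma Ef_0: "Ef p k $ 0 = 1" unfolding Ef_def by simp

lemma Gf_0: "Gf p K $ 0 = 1"
  by (induction K) (simp_all add: Ef_0)

lemma Tf_nth: "0 < j \<Longrightarrow> j < p ^ Suc K \<Longrightarrow> Tf p K $ j = 0"
proof -
  assume j: "0 < j" "j < p ^ Suc K"
  have "\<not> p ^ Suc K dvd j" using j by (auto dest: dvd_imp_le)
  moreover have "p ^ Suc K \<ge> 1" using p1' by simp
  ultimately show ?thesis unfolding Tf_def by (simp add: compose_Xq_nth)
qed

lemma Tf_0: "Tf p K $ 0 = 1" unfolding Tf_def by simp

lemma coeff_binom_lemma:
  fixes F :: "rat fps" assumes n: "n \<ge> 1" and F0: "F $ 0 = 1"
  shows "((F + fps_const c * fps_X ^ n) ^ p) $ n = (F ^ p) $ n + of_nat p * c"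
proof -
  define C where "C = fps_const c * fps_X ^ n"
  have "(C + F) ^ p = (\<Sum>k\<le>p. of_nat (p choose k) * C ^ k * F ^ (p - k))" by (rule binomial_ring)
  then have "((C + F) ^ p) $ n = (\<Sum>k\<le>p. (of_nat (p choose k) * C ^ k * F ^ (p - k)) $ n)"
    by (simp add: fps_sum_nth)
  also have "\<dots> = (\<Sum>k\<le>p. (if k = 0 then (F ^ p) $ n else if k = 1 then of_nat p * c else 0))"
  proof (intro sum.cong refl)
    fix k assume "k \<in> {..p}"
    have Ck: "C ^ k = fps_const (c ^ k) * fps_X ^ (n * k)" unfolding C_def
      by (simp add: power_mult_distrib power_mult fps_const_power)
    have e: "(of_nat (p choose k) * C ^ k * F ^ (p - k)) $ n
          = of_nat (p choose k) * c ^ k * (if n < n * k then 0 else (F ^ (p - k)) $ (n - n * k))"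
      unfolding Ck by (simp add: fps_of_nat[symmetric] mult.assoc fps_X_power_mult_nth)
    show "(of_nat (p choose k) * C ^ k * F ^ (p - k)) $ n = (if k = 0 then (F ^ p) $ n else if k = 1 then of_nat p * c else 0)"
    proof (cases "k \<ge> 2")
      case True
      have "n * 1 < n * k" using True n by (intro mult_less_mono2) auto
      then have "n < n * k" by simp
      then show ?thesis using True e by auto
    next
      case False
      then consider "k = 0" | "k = 1" by linarith
      then show ?thesis
      proof cases
        case 1 then show ?thesis using e by simp
      next
        case 2
        have "(F ^ (p - 1)) $ 0 = 1" using F0 by (simp add: fps_nth_power_0)
        then show ?thesis using e 2 by simp
      qed
    qed
  qed
  also have "\<dots> = (F ^ p) $ n + of_nat p * c"
  proof -
    have s: "{..p} = insert 0 (insert 1 ({..p} - {0, 1}))" using p1' by auto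
    show ?thesis by (subst s) (simp add: sum.insert_remove)
  qed
  finally show ?thesis unfolding C_def by (simp add: add.commute)
qed

lemma Gf_int: "n < p ^ Suc K \<Longrightarrow> pint p (Gf p K $ n)"
proof (induction n rule: less_induct)
  case (less n)
  define f where "f = Gf p K"
  define N where "N = p ^ Suc K"
  show ?case
  proof (cases "n = 0")
    case True then show ?thesis using Gf_0 pint_1[OF p] by simp
  next
    case False
    then have n1: "n \<ge> 1" by simp
    have IH: "\<And>i. i < n \<Longrightarrow> pint p (f $ i)" using less f_def by simp
    define c where "c = f $ n"
    define f' where "f' = Abs_fps (\<lambda>i. if i = n then 0 else f $ i)"
    have f_dec: "f = f' + fps_const c * fps_X ^ n" unfolding f'_def c_def by (auto simp: fps_eq_iff)
    have f'0: "f' $ 0 = 1" unfolding f'_def f_def using n1 Gf_0 by simp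
    have rel: "((f oo fps_X ^ p) * fps_exp (of_nat p)) $ n = (f ^ p * Tf p K) $ n"
      unfolding f_def Gf_rel ..
    have rhs: "(f ^ p * Tf p K) $ n = (f ^ p) $ n"
    proof -
      have "(f ^ p * Tf p K) $ n = (\<Sum>i=0..n. (f ^ p) $ i * Tf p K $ (n - i))" by (rule fps_mult_nth)
      also have "\<dots> = (\<Sum>i\<in>{n}. (f ^ p) $ i * Tf p K $ (n - i))"
        by (rule sum.mono_neutral_right) (use less.prems in \<open>auto simp: Tf_nth\<close>)
      finally show ?thesis by (simp add: Tf_0)
    qed
    define S where "S = (\<Sum>i\<in>{0..<n}. (f oo fps_X ^ p) $ i * (of_nat p ^ (n - i) / fact (n - i)))"
    have lhs: "((f oo fps_X ^ p) * fps_exp (of_nat p)) $ n = (f oo fps_X ^ p) $ n + S"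
    proof -
      have "((f oo fps_X ^ p) * fps_exp (of_nat p)) $ n = (\<Sum>i=0..n. (f oo fps_X ^ p) $ i * (of_nat p ^ (n - i) / fact (n - i)))"
        by (simp add: fps_mult_nth)
      also have "{0..n} = insert n {0..<n}" by auto
      finally show ?thesis unfolding S_def by simp
    qed
    have S: "pdv p S" unfolding S_def
    proof (rule pdv_sum[OF p])
      fix i assume i: "i \<in> {0..<n}"
      have "pint p ((f oo fps_X ^ p) $ i)"
      proof -
        have "i div p \<le> i" by (rule div_le_dividend)
        moreover have "i < n" using i by simp
        ultimately have "i div p < n" by linarith
        then show ?thesis using p1' IH pint_0[OF p] by (simp add: compose_Xq_nth)
      qed
      moreover have "pdv p (of_nat p ^ (n - i) / fact (n - i))" using i by (intro pdv_pow_div_fact[OF p]) auto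
      ultimately show "pdv p ((f oo fps_X ^ p) $ i * (of_nat p ^ (n - i) / fact (n - i)))"
        by (rule pdv_mult_left[OF p])
    qed
    have fp: "(f ^ p) $ n = (f' ^ p) $ n + of_nat p * c"
      unfolding f_dec using coeff_binom_lemma[OF n1 f'0] by simp
    have pf': "pintU p n f'" unfolding pintU_def f'_def using IH pint_0[OF p] by auto
    have fr: "pdv p ((f' ^ p) $ n - (f' oo fps_X ^ p) $ n)" by (rule frob[OF p pf'])
    have comp': "(f' oo fps_X ^ p) $ n = (f oo fps_X ^ p) $ n"
    proof -
      have "n div p < n" using div_less_dividend[OF p1', of n] n1 by simp
      then have "n div p \<noteq> n" by simp
      then show ?thesis using p1' unfolding f'_def by (simp add: compose_Xq_nth)
    qed
    have "of_nat p * c = ((f oo fps_X ^ p) $ n - (f' ^ p) $ n) + S"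
      using rel rhs lhs fp comp' by simp
    also have "\<dots> = - ((f' ^ p) $ n - (f' oo fps_X ^ p) $ n) + S" using comp' by simp
    finally have "pdv p (of_nat p * c)" using pdv_add[OF p pdv_uminus[OF p fr] S] by simp
    then show ?thesis unfolding pdv_def c_def f_def using p1' by simp
  qed
qed

end

definition vge :: "('a \<Rightarrow> ereal) \<Rightarrow> 'a \<Rightarrow> real \<Rightarrow> bool" where
  "vge v x c \<longleftrightarrow> ereal c \<le> v x"

context
  fixes v :: "'a::field_char_0 \<Rightarrow> ereal" and p :: nat
  assumes nv: "nonarch_val p v" and p: "prime p"
begin

lemma v_mult: "v (x * y) = v x + v y" using nv unfolding nonarch_val_def by blast
lemma v_ultra: "min (v x) (v y) \<le> v (x + y)" using nv unfolding nonarch_val_def by blast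
lemma v_zero: "v 0 = \<infinity>" using nv unfolding nonarch_val_def by blast
lemma v_nz: "x \<noteq> 0 \<Longrightarrow> v x \<noteq> \<infinity>" using nv unfolding nonarch_val_def by blast
lemma v_ninf: "v x \<noteq> -\<infinity>" using nv unfolding nonarch_val_def by blast
lemma v_p: "v (of_nat p) = 1" using nv unfolding nonarch_val_def by blast

lemma v_finite: assumes "x \<noteq> 0" obtains r where "v x = ereal r"
  using v_nz[OF assms] v_ninf[of x] by (cases "v x") auto

lemma v_one: "v 1 = 0"
proof -
  obtain r where r: "v 1 = ereal r" using v_finite[of 1] by auto
  have "v 1 = v 1 + v 1" using v_mult[of 1 1] by simp
  then have "r = r + r" using r by simp
  then show ?thesis using r by simp
qed

lemma v_inverse: assumes "x \<noteq> 0" "v x = ereal c" shows "v (inverse x) = ereal (- c)"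
proof -
  have "inverse x \<noteq> 0" using assms by simp
  then obtain r where r: "v (inverse x) = ereal r" using v_finite by blast
  have "0 = v (x * inverse x)" using assms v_one by simp
  also have "\<dots> = v x + v (inverse x)" by (rule v_mult)
  also have "\<dots> = ereal (c + r)" using assms r by simp
  finally show ?thesis using r by simp
qed

lemma v_power_exact: "v x = ereal c \<Longrightarrow> v (x ^ n) = ereal (real n * c)"
proof (induction n)
  case 0 then show ?case using v_one by (simp add: zero_ereal_def)
next
  case (Suc n) then show ?case using v_mult[of x "x ^ n"] by (simp add: algebra_simps)
qed

lemma v_neg1: "v (-1) = 0"
proof -
  obtain r where r: "v (-1) = ereal r" using v_finite[of "-1"] by auto
  have "v 1 = v (-1) + v (-1)" using v_mult[of "-1" "-1"] by simp
  then have "0 = r + r" using r v_one by (simp add: zero_ereal_def)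
  then show ?thesis using r by (simp add: zero_ereal_def)
qed

lemma v_uminus: "v (- x) = v x"
  using v_mult[of "-1" x] v_neg1 by simp

lemma vge_0: "vge v 0 c" unfolding vge_def using v_zero by simp

lemma vge_mult: "vge v x a \<Longrightarrow> vge v y b \<Longrightarrow> vge v (x * y) (a + b)"
  unfolding vge_def v_mult
proof -
  assume "ereal a \<le> v x" "ereal b \<le> v y"
  then have "ereal a + ereal b \<le> v x + v y" by (rule add_mono)
  then show "ereal (a + b) \<le> v x + v y" by simp
qed

lemma vge_add: "vge v x c \<Longrightarrow> vge v y c \<Longrightarrow> vge v (x + y) c"
  unfolding vge_def using v_ultra[of x y] by (metis min.boundedI order_trans)

lemma vge_uminus: "vge v x c \<Longrightarrow> vge v (- x) c"
  unfolding vge_def v_uminus .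

lemma vge_mono: "vge v x a \<Longrightarrow> b \<le> a \<Longrightarrow> vge v x b"
  unfolding vge_def by (metis ereal_less_eq(3) order_trans)

lemma vge_sum: "(\<And>i. i \<in> S \<Longrightarrow> vge v (f i) c) \<Longrightarrow> vge v (sum f S) c"
  by (induction S rule: infinite_finite_induct) (auto simp: vge_0 vge_add)

lemma vge_1: "vge v 1 0" unfolding vge_def v_one by simp

lemma vge_power: "vge v x a \<Longrightarrow> vge v (x ^ n) (real n * a)"
proof (induction n)
  case 0 then show ?case using vge_1 by simp
next
  case (Suc n) then show ?case using vge_mult[OF Suc.prems Suc.IH] by (simp add: algebra_simps)
qed

lemma vge_of_nat: "vge v (of_nat n) 0"
proof (induction n)
  case 0 then show ?case using vge_0 by simp
next
  case (Suc n) then show ?case using vge_add[OF vge_1 Suc] by (simp add: add.commute)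
qed

lemma vge_of_int: "vge v (of_int k) 0"
proof (cases "k \<ge> 0")
  case True then show ?thesis using vge_of_nat[of "nat k"] by simp
next
  case False then show ?thesis using vge_uminus[OF vge_of_nat[of "nat (- k)"]] by simp
qed

lemma v_coprime: assumes "\<not> int p dvd b" shows "v (of_int b) = 0"
proof -
  have "coprime (int p) b" using assms p
    by (simp add: prime_imp_coprime prime_nat_iff_prime)
  then have "gcd b (int p) = 1" by (simp add: coprime_iff_gcd_eq_1 gcd.commute)
  then obtain s t where st: "s * b + t * int p = 1" using bezout_int[of b "int p"] by auto
  have b0: "b \<noteq> 0" using assms by auto
  then obtain r where r: "v (of_int b) = ereal r" using v_finite[of "of_int b"] by auto
  have r0: "r \<ge> 0" using vge_of_int[of b] r unfolding vge_def by simp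
  have A: "vge v (of_int t * of_nat p) 1" using vge_mult[OF vge_of_int[of t], of "of_nat p" 1] v_p
    unfolding vge_def by simp
  have B: "vge v (of_int s * of_int b) r" using vge_mult[OF vge_of_int[of s], of "of_int b" r] r
    unfolding vge_def by simp
  show ?thesis
  proof (rule ccontr)
    assume "v (of_int b) \<noteq> 0"
    then have "r > 0" using r r0 by (auto simp: zero_ereal_def)
    then have "vge v (of_int s * of_int b + of_int t * of_nat p) (min r 1)"
      using vge_add[OF vge_mono[OF B] vge_mono[OF A]] by simp
    moreover have "(of_int s * of_int b + of_int t * of_nat p :: 'a) = 1"
      using arg_cong[OF st, of "of_int :: int \<Rightarrow> 'a"] by simp
    ultimately show False using v_one \<open>r > 0\<close> unfolding vge_def
      by (cases "r \<le> 1") (auto simp: min_def zero_ereal_def)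
  qed
qed

end

context
  fixes v :: "'a::field_char_0 \<Rightarrow> ereal" and p :: nat
  assumes nv: "nonarch_val p v" and p: "prime p"
begin

lemma vge_rat: assumes "pint p r" shows "vge v (of_rat r :: 'a) 0"
proof -
  obtain a b where ab: "b \<noteq> 0" "\<not> int p dvd b" "r = of_int a / of_int b" using assms pint_def by auto
  have "(of_rat r :: 'a) = of_int a * inverse (of_int b)" using ab by (simp add: divide_inverse of_rat_mult of_rat_inverse)
  moreover have "vge v (inverse (of_int b :: 'a)) 0"
    using v_inverse[OF nv p, of "of_int b" 0] v_coprime[OF nv p ab(2)] ab(1) unfolding vge_def
    by (simp add: zero_ereal_def)
  ultimately show ?thesis using vge_mult[OF nv p vge_of_int[OF nv p, of a]] by fastforce
qed

lemma v_of_nat_p_pow: "v (of_nat p ^ j :: 'a) = ereal (real j)"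
  using v_power_exact[OF nv p, of "of_nat p" 1 j] v_p[OF nv p] by (simp add: one_ereal_def)

lemma vge_inv_p_pow: "vge v (inverse (of_nat p ^ j :: 'a)) (- real j)"
proof -
  have "(of_nat p ^ j :: 'a) \<noteq> 0" using p prime_gt_0_nat by simp
  then show ?thesis using v_inverse[OF nv p _ v_of_nat_p_pow] unfolding vge_def by simp
qed

lemma vge_inv_fact: "vge v (inverse (fact m :: 'a)) (- (real m / (real p - 1)))"
proof -
  have p1: "p > 1" using p prime_gt_1_nat by blast
  obtain u :: nat where u: "fact m = p ^ multiplicity p (fact m :: nat) * u" "\<not> p dvd u"
    using fact_decomp[OF p] by blast
  define e where "e = multiplicity p (fact m :: nat)"
  have vu: "v (of_nat u :: 'a) = 0" using v_coprime[OF nv p, of "int u"] u(2) by simp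
  have "(fact m :: nat) = p ^ e * u" using u e_def by simp
  then have "(of_nat (fact m :: nat) :: 'a) = of_nat (p ^ e * u)" by (rule arg_cong)
  then have fm: "(fact m :: 'a) = of_nat p ^ e * of_nat u" by simp
  have vf: "v (fact m :: 'a) = ereal (real e)" unfolding fm v_mult[OF nv p] vu v_of_nat_p_pow by simp
  have "vge v (inverse (fact m :: 'a)) (- real e)"
    using v_inverse[OF nv p _ vf] unfolding vge_def by simp
  moreover have "real e \<le> real m / (real p - 1)"
  proof (cases "m = 0")
    case True then show ?thesis unfolding e_def by simp
  next
    case False
    then have "(p - 1) * e \<le> m - 1" using nu_bound[OF p, of m] e_def by simp
    then have "(p - 1) * e \<le> m" by linarith
    then have "real ((p - 1) * e) \<le> real m" by (simp only: of_nat_le_iff)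
    then have "real (p - 1) * real e \<le> real m" by simp
    then have "(real p - 1) * real e \<le> real m" using p1 by (simp add: of_nat_diff)
    then show ?thesis using p1 by (simp add: field_simps)
  qed
  ultimately show ?thesis using vge_mono[OF nv p, of "inverse (fact m :: 'a)" "- real e" "- (real m / (real p - 1))"]
    by linarith
qed

lemma v_w: assumes w: "w ^ (p - 1) = - (of_nat p :: 'a)" shows "vge v w (1 / (real p - 1))"
proof -
  have p1: "p > 1" using p prime_gt_1_nat by blast
  have w0: "w \<noteq> 0"
  proof
    assume "w = 0"
    moreover obtain k where "p - 1 = Suc k" using p1 by (metis Suc_diff_Suc diff_zero)
    ultimately have "(0::'a) = - of_nat p" using w by simp
    then show False using p1 by simp
  qed
  obtain c where c: "v w = ereal c" using v_finite[OF nv p w0] by blast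
  have "v (w ^ (p - 1)) = ereal (real (p - 1) * c)" using v_power_exact[OF nv p c] .
  moreover have "v (w ^ (p - 1)) = 1" unfolding w v_uminus[OF nv p] v_p[OF nv p] ..
  ultimately have "real (p - 1) * c = 1" by (metis ereal.inject one_ereal_def)
  moreover have "real (p - 1) = real p - 1" using p1 by (simp add: of_nat_diff)
  ultimately have "(real p - 1) * c = 1" by simp
  then have "c = 1 / (real p - 1)" using p1 by (simp add: field_simps)
  then show ?thesis unfolding vge_def c by simp
qed

end

definition Mw :: "'a::field_char_0 \<Rightarrow> rat fps \<Rightarrow> 'a fps" where
  "Mw w f = Abs_fps (\<lambda>n. w ^ n * of_rat (f $ n))"

lemma of_rat_fact [simp]: "(of_rat (fact n) :: 'a::field_char_0) = fact n"
  by (induction n) (simp_all add: of_rat_mult of_rat_add)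

lemma Mw_nth: "Mw w f $ n = w ^ n * of_rat (f $ n)" unfolding Mw_def by simp

lemma Mw_mult: "Mw w (f * g) = Mw w f * Mw w g"
proof (rule fps_ext)
  fix n
  have "Mw w (f * g) $ n = (\<Sum>i=0..n. w ^ n * (of_rat (f $ i) * of_rat (g $ (n - i))))"
    unfolding Mw_nth fps_mult_nth by (simp add: of_rat_sum of_rat_mult sum_distrib_left)
  also have "\<dots> = (\<Sum>i=0..n. (w ^ i * of_rat (f $ i)) * (w ^ (n - i) * of_rat (g $ (n - i))))"
  proof (intro sum.cong refl)
    fix i assume "i \<in> {0..n}"
    then have "w ^ n = w ^ i * w ^ (n - i)" by (simp add: power_add[symmetric])
    then show "w ^ n * (of_rat (f $ i) * of_rat (g $ (n - i))) = (w ^ i * of_rat (f $ i)) * (w ^ (n - i) * of_rat (g $ (n - i)))"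
      by (simp add: ac_simps)
  qed
  also have "\<dots> = (Mw w f * Mw w g) $ n" unfolding fps_mult_nth Mw_nth ..
  finally show "Mw w (f * g) $ n = (Mw w f * Mw w g) $ n" .
qed

lemma Mw_1: "Mw w 1 = 1"
  by (rule fps_ext) (simp add: Mw_nth)

lemma Mw_prod: "Mw w (prod f S) = (\<Prod>k\<in>S. Mw w (f k))"
  by (induction S rule: infinite_finite_induct) (auto simp: Mw_1 Mw_mult)

context fixes p :: nat assumes p: "prime p"
begin

lemma theta_Mw:
  fixes w :: "'a::field_char_0"
  assumes w: "w ^ (p - 1) = - of_nat p"
  shows "dwork_theta p w = Mw w (Gf p 1)"
proof -
  have p1: "p > 1" using p prime_gt_1_nat by blast
  have G1: "Gf p 1 = fps_exp 1 * (fps_exp (1 / of_nat p) oo fps_X ^ p)"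
    by (simp add: Ef_def)
  have A: "Mw w (fps_exp 1) = fps_exp w"
    by (rule fps_ext) (simp add: Mw_nth of_rat_divide)
  have wp: "w ^ p = - of_nat p * w"
  proof -
    have e: "p = Suc (p - 1)" using p1 by simp
    have "w ^ p = w ^ (p - 1) * w" by (subst e) (simp only: power_Suc2)
    then show ?thesis using w by simp
  qed
  have B: "Mw w (fps_exp (1 / of_nat p) oo fps_X ^ p) = fps_exp (- w) oo fps_X ^ p"
  proof (rule fps_ext)
    fix n
    show "Mw w (fps_exp (1 / of_nat p) oo fps_X ^ p) $ n = (fps_exp (- w) oo fps_X ^ p) $ n"
    proof (cases "p dvd n")
      case True
      then obtain m where n: "n = p * m" by auto
      have "w ^ n = (- of_nat p * w) ^ m" unfolding n power_mult wp ..
      also have "\<dots> = (of_nat p * (- w)) ^ m" by (simp only: mult_minus_left mult_minus_right)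
      also have "\<dots> = of_nat p ^ m * (- w) ^ m" by (rule power_mult_distrib)
      finally have wn: "w ^ n = of_nat p ^ m * (- w) ^ m" .
      have "Mw w (fps_exp (1 / of_nat p) oo fps_X ^ p) $ n = w ^ n * of_rat ((1 / of_nat p) ^ m / fact m)"
        using p1 n by (simp add: Mw_nth compose_Xq_nth)
      also have "\<dots> = (- w) ^ m / fact m"
      proof -
        have pm: "(of_nat p ^ m :: 'a) \<noteq> 0" using p1 by simp
        have "of_rat ((1 / of_nat p) ^ m / fact m) = (1 / of_nat p ^ m) / (fact m :: 'a)"
          by (simp add: of_rat_divide of_rat_power power_divide of_rat_mult)
        then show ?thesis unfolding wn using pm p1 by simp
      qed
      also have "\<dots> = (fps_exp (- w) oo fps_X ^ p) $ n"
        using p1 n by (simp add: compose_Xq_nth)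
      finally show ?thesis .
    next
      case False
      then show ?thesis using p1 by (simp add: Mw_nth compose_Xq_nth)
    qed
  qed
  show ?thesis unfolding dwork_theta_def G1 Mw_mult A B ..
qed

end

definition LB :: "('a::field_char_0 \<Rightarrow> ereal) \<Rightarrow> real \<Rightarrow> nat \<Rightarrow> 'a fps \<Rightarrow> bool" where
  "LB v c N f \<longleftrightarrow> (\<forall>n<N. vge v (f $ n) (c * real n))"

context
  fixes v :: "'a::field_char_0 \<Rightarrow> ereal" and p :: nat
  assumes nv: "nonarch_val p v" and p: "prime p"
begin

lemma LB_mult: assumes "LB v c N f" "LB v c N g" shows "LB v c N (f * g)"
  unfolding LB_def
proof (intro allI impI)
  fix n assume n: "n < N"
  have "vge v (\<Sum>i=0..n. f $ i * g $ (n - i)) (c * real n)"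
  proof (rule vge_sum[OF nv p])
    fix i assume i: "i \<in> {0..n}"
    have "vge v (f $ i) (c * real i)" using assms(1) i n unfolding LB_def by auto
    moreover have "n - i < N" using n by simp
    then have "vge v (g $ (n - i)) (c * real (n - i))" using assms(2) unfolding LB_def by blast
    ultimately have "vge v (f $ i * g $ (n - i)) (c * real i + c * real (n - i))" by (rule vge_mult[OF nv p])
    moreover have "c * real i + c * real (n - i) = c * real n" using i by (simp add: of_nat_diff algebra_simps)
    ultimately show "vge v (f $ i * g $ (n - i)) (c * real n)" by simp
  qed
  then show "vge v ((f * g) $ n) (c * real n)" by (simp add: fps_mult_nth)
qed

lemma LB_one: "LB v c N 1"
  unfolding LB_def
proof (intro allI impI)
  fix n show "vge v ((1::'a fps) $ n) (c * real n)"
    by (cases "n = 0") (auto simp: vge_0[OF nv p] vge_1[OF nv p])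
qed

lemma LB_prod: "(\<And>k. k \<in> S \<Longrightarrow> LB v c N (f k)) \<Longrightarrow> LB v c N (prod f S)"
  by (induction S rule: infinite_finite_induct) (auto simp: LB_one LB_mult)

lemma LB_mono: assumes "LB v c N f" "c' \<le> c" "N' \<le> N" shows "LB v c' N' f"
  unfolding LB_def
proof (intro allI impI)
  fix n assume "n < N'"
  then have "vge v (f $ n) (c * real n)" using assms unfolding LB_def by auto
  moreover have "c' * real n \<le> c * real n" using assms(2) by (simp add: mult_right_mono)
  ultimately show "vge v (f $ n) (c' * real n)" by (rule vge_mono[OF nv p])
qed

lemma LB_compose:
  assumes f: "LB v c N f" and a: "vge v a 0" and i: "1 \<le> i" "i \<le> d" and c: "0 \<le> c"
  shows "LB v (c / real d) N (f oo (fps_const a * fps_X ^ i))"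
  unfolding LB_def
proof (intro allI impI)
  fix n assume n: "n < N"
  show "vge v ((f oo (fps_const a * fps_X ^ i)) $ n) (c / real d * real n)"
  proof (cases "i dvd n")
    case False then show ?thesis using i by (simp add: compose_cXq_nth vge_0[OF nv p])
  next
    case True
    then obtain m where m: "n = i * m" by auto
    have mi: "n div i = m" using m i by simp
    have "m \<le> n" using m i by simp
    then have "vge v (f $ m) (c * real m)" using f n unfolding LB_def by auto
    moreover have "vge v (a ^ m) (real m * 0)" by (rule vge_power[OF nv p a])
    ultimately have "vge v (a ^ m * f $ m) (real m * 0 + c * real m)" by (intro vge_mult[OF nv p])
    moreover have "c / real d * real n \<le> real m * 0 + c * real m"
    proof -
      have "real n = real i * real m" using m by simp
      moreover have "real i \<le> real d" using i by simp
      moreover have "real d \<ge> 1" using i by simp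
      ultimately have "real n / real d \<le> real m"
        by (simp add: divide_le_eq mult_right_mono mult.commute)
      then have "c * (real n / real d) \<le> c * real m" using c by (rule mult_left_mono)
      then show ?thesis by simp
    qed
    ultimately have "vge v (a ^ m * f $ m) (c / real d * real n)" by (rule vge_mono[OF nv p])
    then show ?thesis using True i mi by (simp add: compose_cXq_nth)
  qed
qed

end

definition Eif :: "nat \<Rightarrow> nat \<Rightarrow> rat fps" where
  "Eif p k = fps_exp (- (1 / of_nat p ^ k)) oo fps_X ^ (p ^ k)"

definition Hf :: "nat \<Rightarrow> nat \<Rightarrow> rat fps" where
  "Hf p K = (\<Prod>k\<in>{2..K}. Eif p k)"

lemma key_ineq:
  fixes q :: real and j :: nat assumes q: "q \<ge> 2"
  shows "(q - 1) / q ^ 2 * q ^ (j + 2) \<le> (q ^ (j + 2) - 1) / (q - 1) - real (j + 2)"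
proof -
  define P where "P = q ^ j"
  have P: "1 + real j * (q - 1) \<le> P"
    unfolding P_def using Bernoulli_inequality[of "q - 1" j] q by simp
  have h1: "(2 * q - 1) * (1 + real j * (q - 1)) \<le> (2 * q - 1) * P"
    by (rule mult_left_mono) (use P q in auto)
  have "0 \<le> (2 * q - 2) * real j * (q - 1)" using q by simp
  then have h2: "1 + (real j + 2) * (q - 1) \<le> (2 * q - 1) * (1 + real j * (q - 1))"
    by (simp add: algebra_simps)
  have lhs: "(q - 1) / q ^ 2 * q ^ (j + 2) = (q - 1) * P"
    unfolding P_def using q by (simp add: power_add power2_eq_square)
  have aux: "\<And>P' :: real. 1 + (real j + 2) * (q - 1) \<le> (2 * q - 1) * P' \<Longrightarrow>
      ((q - 1) * P' + (real j + 2)) * (q - 1) \<le> q ^ 2 * P' - 1"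
    by (simp add: algebra_simps power2_eq_square)
  have qe: "q ^ (j + 2) = q ^ 2 * P" unfolding P_def by (simp only: power_add mult.commute)
  have "((q - 1) * P + real (j + 2)) * (q - 1) \<le> q ^ (j + 2) - 1"
  proof -
    have "1 + (real j + 2) * (q - 1) \<le> (2 * q - 1) * P" by (rule order_trans[OF h2 h1])
    then have A: "((q - 1) * P + (real j + 2)) * (q - 1) \<le> q ^ 2 * P - 1" by (rule aux)
    have "real (j + 2) = real j + 2" by simp
    then show ?thesis unfolding qe using A by (simp only:)
  qed
  then have "(q - 1) * P + real (j + 2) \<le> (q ^ (j + 2) - 1) / (q - 1)"
    using q by (simp add: le_divide_eq)
  then show ?thesis unfolding lhs by simp
qed

context fixes p :: nat assumes p: "prime p"
begin

lemma Ef_Eif: "Ef p k * Eif p k = 1"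
proof -
  have X0: "(fps_X ^ (p ^ k) :: rat fps) $ 0 = 0" using p prime_gt_0_nat by simp
  have "Ef p k * Eif p k = (fps_exp (1 / of_nat p ^ k) * fps_exp (- (1 / of_nat p ^ k))) oo fps_X ^ (p ^ k)"
    unfolding Ef_def Eif_def by (rule fps_compose_mult_distrib[OF X0, symmetric])
  also have "fps_exp (1 / of_nat p ^ k) * fps_exp (- (1 / of_nat p ^ k)) = (fps_exp 0 :: rat fps)"
    by (simp add: fps_exp_add_mult[symmetric])
  finally show ?thesis by simp
qed

lemma GH: "K \<ge> 1 \<Longrightarrow> Gf p K * Hf p K = Gf p 1"
proof (induction K rule: dec_induct)
  case base then show ?case by (simp add: Hf_def)
next
  case (step K)
  have "{2..Suc K} = insert (Suc K) {2..K}" using step by auto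
  then have "Hf p (Suc K) = Eif p (Suc K) * Hf p K" unfolding Hf_def by simp
  then have "Gf p (Suc K) * Hf p (Suc K) = (Ef p (Suc K) * Eif p (Suc K)) * (Gf p K * Hf p K)"
    by (simp add: ac_simps)
  then show ?case using step Ef_Eif by simp
qed

end

context
  fixes v :: "'a::field_char_0 \<Rightarrow> ereal" and p :: nat and w :: 'a
  assumes nv: "nonarch_val p v" and p: "prime p" and w: "w ^ (p - 1) = - of_nat p"
begin

lemma alg_aux: "((x - 1) / y - real k) * mm = x * mm * (1 / y) + (mm * 0 + (- real (k * m') + - (mm / y)))"
  if "mm = real m'" for x y mm :: real
  using that by (simp add: algebra_simps diff_divide_distrib)

lemma p1'': "p > 1" using p prime_gt_1_nat by blast

lemma vw: "vge v w (1 / (real p - 1))" using v_w[OF nv p w] .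

lemma LB_MwG: "LB v (1 / (real p - 1)) (p ^ Suc K) (Mw w (Gf p K))"
  unfolding LB_def
proof (intro allI impI)
  fix n assume n: "n < p ^ Suc K"
  have "vge v (w ^ n) (real n * (1 / (real p - 1)))" by (rule vge_power[OF nv p vw])
  moreover have "vge v (of_rat (Gf p K $ n) :: 'a) 0" by (rule vge_rat[OF nv p Gf_int[OF p n]])
  ultimately have "vge v (w ^ n * of_rat (Gf p K $ n)) (real n * (1 / (real p - 1)) + 0)"
    by (rule vge_mult[OF nv p])
  then show "vge v (Mw w (Gf p K) $ n) (1 / (real p - 1) * real n)"
    by (simp add: Mw_nth mult.commute)
qed

lemma LB_MwEif:
  assumes k: "k \<ge> 2"
  shows "LB v ((real p - 1) / real p ^ 2) N (Mw w (Eif p k))"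
  unfolding LB_def
proof (intro allI impI)
  fix n assume n: "n < N"
  have pk: "p ^ k \<ge> 1" using p1'' by simp
  show "vge v (Mw w (Eif p k) $ n) ((real p - 1) / real p ^ 2 * real n)"
  proof (cases "p ^ k dvd n")
    case False
    then show ?thesis using pk by (simp add: Mw_nth Eif_def compose_Xq_nth vge_0[OF nv p])
  next
    case True
    then obtain m where m: "n = p ^ k * m" by auto
    have mdiv: "n div p ^ k = m" using m p1'' by simp
    have coef: "Mw w (Eif p k) $ n = w ^ n * ((-1) ^ m * (inverse (of_nat p ^ (k * m)) * inverse (fact m)))"
    proof -
      have "Mw w (Eif p k) $ n = w ^ n * of_rat ((- (1 / of_nat p ^ k)) ^ m / fact m)"
        using True pk mdiv by (simp add: Mw_nth Eif_def compose_Xq_nth)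
      also have "(of_rat ((- (1 / of_nat p ^ k)) ^ m / fact m) :: 'a) = (-1) ^ m * (inverse (of_nat p ^ (k * m)) * inverse (fact m))"
      proof -
        have a: "- (1 / (of_nat p ^ k :: rat)) = (-1) * inverse (of_nat p ^ k)" by (simp add: inverse_eq_divide)
        have "(- (1 / (of_nat p ^ k :: rat))) ^ m / fact m = (-1) ^ m * inverse (of_nat p ^ k) ^ m / fact m"
          unfolding a by (simp only: power_mult_distrib)
        also have "\<dots> = (-1) ^ m * (inverse (of_nat p ^ (k * m)) * inverse (fact m))"
          by (simp only: power_inverse power_mult divide_inverse mult.assoc)
        finally have r: "(- (1 / (of_nat p ^ k :: rat))) ^ m / fact m = (-1) ^ m * (inverse (of_nat p ^ (k * m)) * inverse (fact m))" .
        show ?thesis unfolding r by (simp add: of_rat_mult of_rat_power of_rat_inverse)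
      qed
      finally show ?thesis .
    qed
    have v1: "vge v (w ^ n) (real n * (1 / (real p - 1)))" by (rule vge_power[OF nv p vw])
    have v2: "vge v ((-1 :: 'a) ^ m) (real m * 0)"
      by (rule vge_power[OF nv p]) (rule vge_uminus[OF nv p vge_1[OF nv p]])
    have v3: "vge v (inverse (of_nat p ^ (k * m)) :: 'a) (- real (k * m))" by (rule vge_inv_p_pow[OF nv p])
    have v4: "vge v (inverse (fact m) :: 'a) (- (real m / (real p - 1)))" by (rule vge_inv_fact[OF nv p])
    have vall: "vge v (Mw w (Eif p k) $ n) (real n * (1 / (real p - 1)) + (real m * 0 + (- real (k * m) + - (real m / (real p - 1)))))"
      unfolding coef by (intro vge_mult[OF nv p] v1 v2 v3 v4)
    have ineq: "(real p - 1) / real p ^ 2 * real n \<le> real n * (1 / (real p - 1)) + (real m * 0 + (- real (k * m) + - (real m / (real p - 1))))"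
    proof -
      obtain j where j: "k = j + 2" using k by (metis add.commute le_Suc_ex)
      have q: "real p \<ge> 2" using p1'' by simp
      have key: "(real p - 1) / real p ^ 2 * real p ^ k \<le> (real p ^ k - 1) / (real p - 1) - real k"
        using key_ineq[OF q, of j] j by simp
      have m0: "real m \<ge> 0" by simp
      have "(real p - 1) / real p ^ 2 * real p ^ k * real m \<le> ((real p ^ k - 1) / (real p - 1) - real k) * real m"
        by (rule mult_right_mono[OF key m0])
      moreover have "real n = real p ^ k * real m" using m by simp
      moreover have "((real p ^ k - 1) / (real p - 1) - real k) * real m
          = real p ^ k * real m * (1 / (real p - 1)) + (real m * 0 + (- real (k * m) + - (real m / (real p - 1))))"
        by (rule alg_aux) simp
      ultimately show ?thesis by (simp add: mult.assoc)
    qed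
    show ?thesis by (rule vge_mono[OF nv p vall ineq])
  qed
qed

lemma LB_theta_small: "LB v (1 / (real p - 1)) (p ^ 2) (dwork_theta p w)"
  using LB_MwG[of 1] theta_Mw[OF p w] by (simp add: power2_eq_square)

lemma LB_theta_all: "LB v ((real p - 1) / real p ^ 2) N (dwork_theta p w)"
proof -
  define K where "K = Suc N"
  have K1: "K \<ge> 1" unfolding K_def by simp
  have th: "dwork_theta p w = Mw w (Gf p K) * (\<Prod>k\<in>{2..K}. Mw w (Eif p k))"
    unfolding theta_Mw[OF p w] GH[OF p K1, symmetric] Mw_mult Hf_def Mw_prod ..
  have cle: "(real p - 1) / real p ^ 2 \<le> 1 / (real p - 1)"
  proof -
    have "(real p - 1) * (real p - 1) \<le> real p ^ 2" using p1'' by (simp add: power2_eq_square algebra_simps)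
    then show ?thesis using p1'' by (simp add: field_simps)
  qed
  have NK: "N \<le> p ^ Suc K"
  proof -
    have "N < 2 ^ N" by (rule less_exp)
    also have "(2::nat) ^ N \<le> p ^ N" using p1'' by (intro power_mono) auto
    also have "p ^ N \<le> p ^ Suc K" using p1'' unfolding K_def by (intro power_increasing) auto
    finally show ?thesis by simp
  qed
  have A: "LB v ((real p - 1) / real p ^ 2) N (Mw w (Gf p K))"
    by (rule LB_mono[OF nv p LB_MwG cle NK])
  have B: "LB v ((real p - 1) / real p ^ 2) N (\<Prod>k\<in>{2..K}. Mw w (Eif p k))"
    by (rule LB_prod[OF nv p]) (rule LB_MwEif, auto)
  show ?thesis unfolding th by (rule LB_mult[OF nv p A B])
qed

end

theorem lemma3p1:
  fixes v :: "'a::field_char_0 \<Rightarrow> ereal" and p m d :: nat and a :: "nat \<Rightarrow> 'a" and w :: 'a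
  assumes "prime p" and "m \<ge> 1"
    and "nonarch_val p v"
    and "w ^ (p - 1) = - of_nat p"
    and "1 \<le> d" and "d < p"
    and "\<forall>i\<in>{1..d}. a i ^ (p ^ m) = a i"
    and "\<forall>i\<in>{1..d}. v (a i) \<ge> 0"
    and "a d \<noteq> 0"
  shows "(\<forall>i. i \<le> p^2 - 1 \<longrightarrow>
            v (fps_nth (dwork_F p w d a) i) \<ge> ereal (real i / (real d * (real p - 1))))
       \<and> (\<forall>i. i \<ge> p^2 \<longrightarrow>
            v (fps_nth (dwork_F p w d a) i) \<ge> ereal ((real p - 1) * real i / (real d * real p ^ 2)))"
proof -
  note p = assms(1) and nv = assms(3) and w = assms(4) and d = assms(5)
  have p1: "p > 1" using p prime_gt_1_nat by blast
  have ai: "\<And>i. i \<in> {1..d} \<Longrightarrow> vge v (a i) 0" using assms(8) unfolding vge_def by (simp add: zero_ereal_def)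
  have gen: "LB v (c / real d) N (dwork_F p w d a)" if th: "LB v c N (dwork_theta p w)" and c: "0 \<le> c" for c N
    unfolding dwork_F_def
  proof (rule LB_prod[OF nv p])
    fix i assume i: "i \<in> {1..d}"
    show "LB v (c / real d) N (dwork_theta p w oo (fps_const (a i) * fps_X ^ i))"
      by (rule LB_compose[OF nv p th ai[OF i]]) (use i c in auto)
  qed
  have c1: "0 \<le> 1 / (real p - 1)" using p1 by simp
  have c2: "0 \<le> (real p - 1) / real p ^ 2" using p1 by simp
  have part1: "\<forall>i. i \<le> p^2 - 1 \<longrightarrow>
            v (fps_nth (dwork_F p w d a) i) \<ge> ereal (real i / (real d * (real p - 1)))"
  proof (intro allI impI)
    fix i assume i: "i \<le> p^2 - 1"
    have pp: "0 < p ^ 2" using p1 by simp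
    have ip: "i < p ^ 2" using i pp by linarith
    have "LB v (1 / (real p - 1) / real d) (p ^ 2) (dwork_F p w d a)"
      by (rule gen[OF LB_theta_small[OF nv p w] c1])
    then have "vge v (dwork_F p w d a $ i) (1 / (real p - 1) / real d * real i)" using ip unfolding LB_def by blast
    moreover have "1 / (real p - 1) / real d * real i = real i / (real d * (real p - 1))" by simp
    ultimately show "v (fps_nth (dwork_F p w d a) i) \<ge> ereal (real i / (real d * (real p - 1)))"
      unfolding vge_def by (simp only:)
  qed
  have part2: "\<forall>i. i \<ge> p^2 \<longrightarrow>
            v (fps_nth (dwork_F p w d a) i) \<ge> ereal ((real p - 1) * real i / (real d * real p ^ 2))"
  proof (intro allI impI)
    fix i assume i: "i \<ge> p^2"
    have "LB v ((real p - 1) / real p ^ 2 / real d) (Suc i) (dwork_F p w d a)"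
      by (rule gen[OF LB_theta_all[OF nv p w] c2])
    then have "vge v (dwork_F p w d a $ i) ((real p - 1) / real p ^ 2 / real d * real i)" unfolding LB_def by blast
    moreover have "(real p - 1) / real p ^ 2 / real d * real i = (real p - 1) * real i / (real d * real p ^ 2)" by simp
    ultimately show "v (fps_nth (dwork_F p w d a) i) \<ge> ereal ((real p - 1) * real i / (real d * real p ^ 2))"
      unfolding vge_def by (simp only:)
  qed
  show ?thesis using part1 part2 by blast
qed

end
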